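(* There is a universal constant $c>0$ such that the following holds. Let $\mathcal N$ be a semi-norm on $\mathbb R^n$ and $\mathbf Z$ a random vector in $\mathbb R^n$ whose distribution is symmetric and log-concave. Then for every $t>0$, $\Pr\big(|\mathcal N(\mathbf Z)-\mathbb E[\mathcal N(\mathbf Z)]|>t\big)\le 2\exp\!\Big(-\frac{c}{\psi_n}\frac{t}{\mathbb E[\mathcal N(\mathbf Z)]}\Big).$
   Context: $\psi_n$ denotes the KLS constant in dimension $n$: the supremum, over all isotropic log-concave probability measures $\mu$ on $\mathbb R^n$, of the reciprocal of the Cheeger (isoperimetric) constant of $\mu$. *)

theory Defs
  imports "HOL-Probability.Probability"
begin

text \<open>Euclidean space R^n, for an explicit dimension n, is modelled as the
  product measurable space of extensional functions on the index set {..<n}.\<close>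

definition Rn :: "nat \<Rightarrow> (nat \<Rightarrow> real) measure" where
  "Rn n = (\<Pi>\<^sub>M i\<in>{..<n}. (borel :: real measure))"

definition vadd :: "nat \<Rightarrow> (nat \<Rightarrow> real) \<Rightarrow> (nat \<Rightarrow> real) \<Rightarrow> (nat \<Rightarrow> real)" where
  "vadd n x y = (\<lambda>i\<in>{..<n}. x i + y i)"

definition smul :: "nat \<Rightarrow> real \<Rightarrow> (nat \<Rightarrow> real) \<Rightarrow> (nat \<Rightarrow> real)" where
  "smul n a x = (\<lambda>i\<in>{..<n}. a * x i)"

definition edist :: "nat \<Rightarrow> (nat \<Rightarrow> real) \<Rightarrow> (nat \<Rightarrow> real) \<Rightarrow> real" where
  "edist n x y = sqrt (\<Sum>i<n. (x i - y i)\<^sup>2)"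

text \<open>Log-concave probability measure on R^n (Borell's definition, tested on compact sets).\<close>
definition log_concave :: "nat \<Rightarrow> (nat \<Rightarrow> real) measure \<Rightarrow> bool" where
  "log_concave n \<mu> \<longleftrightarrow> sets \<mu> = sets (Rn n) \<and> prob_space \<mu> \<and>
     (\<forall>A B l. compact A \<and> compact B \<and> A \<subseteq> space (Rn n) \<and> B \<subseteq> space (Rn n)
        \<and> 0 < l \<and> l < 1 \<longrightarrow>
        measure \<mu> {vadd n (smul n l a) (smul n (1 - l) b) | a b. a \<in> A \<and> b \<in> B}
          \<ge> measure \<mu> A powr l * measure \<mu> B powr (1 - l))"

definition isotropic :: "nat \<Rightarrow> (nat \<Rightarrow> real) measure \<Rightarrow> bool" where
  "isotropic n \<mu> \<longleftrightarrow>
     (\<forall>i<n. integrable \<mu> (\<lambda>x. x i) \<and> (\<integral>x. x i \<partial>\<mu>) = 0) \<and>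
     (\<forall>i<n. \<forall>j<n. integrable \<mu> (\<lambda>x. x i * x j) \<and>
        (\<integral>x. x i * x j \<partial>\<mu>) = (if i = j then 1 else 0))"

definition symmetric_measure :: "nat \<Rightarrow> (nat \<Rightarrow> real) measure \<Rightarrow> bool" where
  "symmetric_measure n \<mu> \<longleftrightarrow> distr \<mu> (Rn n) (smul n (-1)) = \<mu>"

definition seminorm_on :: "nat \<Rightarrow> ((nat \<Rightarrow> real) \<Rightarrow> real) \<Rightarrow> bool" where
  "seminorm_on n N \<longleftrightarrow>
     (\<forall>x\<in>space (Rn n). \<forall>y\<in>space (Rn n). N (vadd n x y) \<le> N x + N y) \<and>
     (\<forall>a. \<forall>x\<in>space (Rn n). N (smul n a x) = \<bar>a\<bar> * N x)"

definition enbhd :: "nat \<Rightarrow> (nat \<Rightarrow> real) set \<Rightarrow> real \<Rightarrow> (nat \<Rightarrow> real) set" where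
  "enbhd n A e = {x \<in> space (Rn n). \<exists>a\<in>A. edist n x a < e}"

definition boundary_measure :: "nat \<Rightarrow> (nat \<Rightarrow> real) measure \<Rightarrow> (nat \<Rightarrow> real) set \<Rightarrow> ereal" where
  "boundary_measure n \<mu> A =
     Liminf (at_right 0) (\<lambda>e. ereal ((measure \<mu> (enbhd n A e) - measure \<mu> A) / e))"

definition cheeger :: "nat \<Rightarrow> (nat \<Rightarrow> real) measure \<Rightarrow> ereal" where
  "cheeger n \<mu> = (INF A \<in> {A \<in> sets \<mu>. 0 < measure \<mu> A \<and> measure \<mu> A < 1}.
      boundary_measure n \<mu> A / ereal (min (measure \<mu> A) (1 - measure \<mu> A)))"

definition KLS :: "nat \<Rightarrow> ereal" where
  "KLS n = (SUP \<mu> \<in> {\<mu>. log_concave n \<mu> \<and> isotropic n \<mu>}. 1 / cheeger n \<mu>)"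

definition psi :: "nat \<Rightarrow> real" where
  "psi n = real_of_ereal (KLS n)"

end

theory Submission
  imports Defs
begin

lemma space_Rn: "space (Rn n) = PiE {..<n} (\<lambda>_. UNIV)"
  by (simp add: Rn_def space_PiM)

lemma vadd_in[simp]: "vadd n x y \<in> space (Rn n)"
  by (simp add: space_Rn vadd_def)

lemma smul_in[simp]: "smul n a x \<in> space (Rn n)"
  by (simp add: space_Rn smul_def)

lemma restrict_in[simp]: "restrict x {..<n} \<in> space (Rn n)"
  by (simp add: space_Rn)

lemma space_restrict: "x \<in> space (Rn n) \<Longrightarrow> restrict x {..<n} = x"
  by (simp add: space_Rn extensional_restrict)

definition evec :: "nat \<Rightarrow> nat \<Rightarrow> nat \<Rightarrow> real" where
  "evec n i = (\<lambda>j\<in>{..<n}. if j = i then 1 else 0)"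

context
  fixes n :: nat and N :: "(nat \<Rightarrow> real) \<Rightarrow> real"
  assumes sn: "seminorm_on n N"
begin

lemma sn_tri: "x \<in> space (Rn n) \<Longrightarrow> y \<in> space (Rn n) \<Longrightarrow> N (vadd n x y) \<le> N x + N y"
  using sn unfolding seminorm_on_def by blast

lemma sn_hom: "x \<in> space (Rn n) \<Longrightarrow> N (smul n a x) = \<bar>a\<bar> * N x"
  using sn unfolding seminorm_on_def by blast

lemma sn_zero: "N (\<lambda>i\<in>{..<n}. 0) = 0"
proof -
  have "smul n 0 (\<lambda>i\<in>{..<n}. 0) = (\<lambda>i\<in>{..<n}. 0)" by (simp add: smul_def)
  then show ?thesis using sn_hom[of "(\<lambda>i\<in>{..<n}. 0)" 0] by (simp add: space_Rn)
qed

lemma sn_nonneg: "x \<in> space (Rn n) \<Longrightarrow> 0 \<le> N x"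
proof -
  assume x: "x \<in> space (Rn n)"
  have "vadd n x (smul n (-1) x) = (\<lambda>i\<in>{..<n}. 0)" by (auto simp add: vadd_def smul_def fun_eq_iff)
  moreover have "N (vadd n x (smul n (-1) x)) \<le> N x + N (smul n (-1) x)" by (rule sn_tri[OF x smul_in])
  ultimately have "0 \<le> N x + N (smul n (-1) x)" using sn_zero by simp
  then show ?thesis using sn_hom[OF x, of "-1"] by simp
qed

lemma sn_decomp: "d \<in> space (Rn n) \<Longrightarrow> N d \<le> (\<Sum>i<n. \<bar>d i\<bar> * N (evec n i))"
proof -
  assume d: "d \<in> space (Rn n)"
  define part where "part k = (\<lambda>j\<in>{..<n}. if j < k then d j else 0)" for k
  have "k \<le> n \<Longrightarrow> N (part k) \<le> (\<Sum>i<k. \<bar>d i\<bar> * N (evec n i))" for k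
  proof (induction k)
    case 0
    have "part 0 = (\<lambda>i\<in>{..<n}. 0)" by (simp add: part_def)
    then have "N (part 0) = 0" using sn_zero by (simp only:)
    then show ?case by simp
  next
    case (Suc k)
    have eq: "part (Suc k) = vadd n (part k) (smul n (d k) (evec n k))"
      by (auto simp: part_def vadd_def smul_def evec_def fun_eq_iff less_Suc_eq)
    have "N (part (Suc k)) \<le> N (part k) + N (smul n (d k) (evec n k))"
      unfolding eq by (rule sn_tri) (simp_all only: smul_in part_def restrict_in)
    also have "N (smul n (d k) (evec n k)) = \<bar>d k\<bar> * N (evec n k)"
      by (rule sn_hom) (simp add: evec_def space_Rn)
    finally show ?case using Suc by simp
  qed
  moreover have "part n = d" using d by (auto simp: part_def space_Rn PiE_def extensional_def fun_eq_iff)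
  ultimately show ?thesis by force
qed

lemma sn_lip: "x \<in> space (Rn n) \<Longrightarrow> y \<in> space (Rn n) \<Longrightarrow>
   N x \<le> N y + (\<Sum>i<n. \<bar>x i - y i\<bar> * N (evec n i))"
proof -
  assume x: "x \<in> space (Rn n)" and y: "y \<in> space (Rn n)"
  have "vadd n y (vadd n x (smul n (-1) y)) = x" using x
    by (auto simp: vadd_def smul_def space_Rn PiE_def extensional_def fun_eq_iff)
  then have "N x \<le> N y + N (vadd n x (smul n (-1) y))" using sn_tri[OF y vadd_in, of x "smul n (-1) y"] by simp
  also have "N (vadd n x (smul n (-1) y)) \<le> (\<Sum>i<n. \<bar>vadd n x (smul n (-1) y) i\<bar> * N (evec n i))"
    by (rule sn_decomp) simp
  also have "\<dots> = (\<Sum>i<n. \<bar>x i - y i\<bar> * N (evec n i))"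
    by (rule sum.cong) (auto simp: vadd_def smul_def)
  finally show ?thesis by simp
qed

lemma sn_cont: "continuous_on UNIV (\<lambda>x. N (restrict x {..<n}))"
proof -
  have "isCont (\<lambda>x. N (restrict x {..<n})) x" for x :: "nat \<Rightarrow> real"
  proof -
    let ?g = "\<lambda>x. N (restrict x {..<n})"
    have b: "norm (?g y - ?g x) \<le> (\<Sum>i<n. \<bar>y i - x i\<bar> * N (evec n i))" for y
      using sn_lip[of "restrict y {..<n}" "restrict x {..<n}"]
        sn_lip[of "restrict x {..<n}" "restrict y {..<n}"]
      by (simp add: abs_minus_commute)
    have c: "((\<lambda>y. \<Sum>i<n. \<bar>y i - x i\<bar> * N (evec n i)) \<longlongrightarrow> 0) (at x)"
    proof -
      have "((\<lambda>y. \<Sum>i<n. \<bar>y i - x i\<bar> * N (evec n i)) \<longlongrightarrow> (\<Sum>i<n. \<bar>x i - x i\<bar> * N (evec n i))) (at x)"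
      proof (intro tendsto_intros)
        fix i
        have "isCont (\<lambda>x::nat\<Rightarrow>real. x i) x"
          using continuous_on_product_coordinates[of i] continuous_on_eq_continuous_at[OF open_UNIV] by blast
        then show "((\<lambda>y. y i) \<longlongrightarrow> x i) (at x)" by (simp add: isCont_def)
      qed
      then show ?thesis by simp
    qed
    have "((\<lambda>y. ?g y - ?g x) \<longlongrightarrow> 0) (at x)"
      by (rule Lim_null_comparison[OF _ c]) (intro always_eventually allI, use b in simp)
    then show ?thesis unfolding isCont_def by (simp add: LIM_zero_iff)
  qed
  then show ?thesis by (simp add: continuous_on_eq_continuous_at)
qed

lemma box_compact: "compact (PiE UNIV (\<lambda>i. if i < n then {-R..R} else {undefined::real}))"
proof -
  have "compactin (product_topology (\<lambda>i. euclidean) UNIV) (PiE UNIV (\<lambda>i. if i < n then {-R..R} else {undefined::real}))"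
    by (subst compactin_PiE) auto
  then show ?thesis by (simp add: euclidean_product_topology)
qed

lemma box_eq: "x \<in> PiE UNIV (\<lambda>i. if i < n then {-R..R} else {undefined::real}) \<longleftrightarrow>
   x \<in> space (Rn n) \<and> (\<forall>i<n. \<bar>x i\<bar> \<le> R)"
proof -
  have "x \<in> PiE UNIV (\<lambda>i. if i < n then {-R..R} else {undefined::real}) \<longleftrightarrow> (\<forall>i. x i \<in> (if i < n then {-R..R} else {undefined::real}))"
    by (simp add: PiE_UNIV_domain Pi_iff)
  also have "\<dots> \<longleftrightarrow> (\<forall>i. i \<ge> n \<longrightarrow> x i = undefined) \<and> (\<forall>i<n. \<bar>x i\<bar> \<le> R)"
    by (metis abs_le_iff atLeastAtMost_iff minus_le_iff not_le singleton_iff)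
  also have "\<dots> \<longleftrightarrow> x \<in> space (Rn n) \<and> (\<forall>i<n. \<bar>x i\<bar> \<le> R)"
    by (simp add: space_Rn PiE_iff extensional_def not_less)
  finally show ?thesis .
qed

lemma compact_ge: "compact {x \<in> space (Rn n). a \<le> N x \<and> (\<forall>i<n. \<bar>x i\<bar> \<le> R)}"
proof -
  have c: "closed {x. a \<le> N (restrict x {..<n})}"
    by (rule closed_Collect_le[OF continuous_on_const sn_cont])
  have "{x \<in> space (Rn n). a \<le> N x \<and> (\<forall>i<n. \<bar>x i\<bar> \<le> R)} =
     PiE UNIV (\<lambda>i. if i < n then {-R..R} else {undefined::real}) \<inter> {x. a \<le> N (restrict x {..<n})}"
    using box_eq space_restrict by (auto simp del: space_Rn)
  then show ?thesis using compact_Int_closed[OF box_compact c] by simp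
qed

lemma compact_le: "compact {x \<in> space (Rn n). N x \<le> a \<and> (\<forall>i<n. \<bar>x i\<bar> \<le> R)}"
proof -
  have c: "closed {x. N (restrict x {..<n}) \<le> a}"
    by (rule closed_Collect_le[OF sn_cont continuous_on_const])
  have "{x \<in> space (Rn n). N x \<le> a \<and> (\<forall>i<n. \<bar>x i\<bar> \<le> R)} =
     PiE UNIV (\<lambda>i. if i < n then {-R..R} else {undefined::real}) \<inter> {x. N (restrict x {..<n}) \<le> a}"
    using box_eq space_restrict by (auto simp del: space_Rn)
  then show ?thesis using compact_Int_closed[OF box_compact c] by simp
qed

end

lemma comb_eq: "smul n l a = vadd n (vadd n (smul n l a) (smul n (1 - l) b)) (smul n (l - 1) b)"
proof (rule ext)
  fix i show "smul n l a i = vadd n (vadd n (smul n l a) (smul n (1 - l) b)) (smul n (l - 1) b) i"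
  proof (cases "i < n")
    case True
    then have "vadd n (vadd n (smul n l a) (smul n (1 - l) b)) (smul n (l - 1) b) i = (l * a i + (1 - l) * b i) + (l - 1) * b i"
      by (simp add: vadd_def smul_def)
    also have "\<dots> = l * a i" by (simp add: algebra_simps)
    finally show ?thesis using True by (simp add: smul_def)
  next
    case False then show ?thesis by (simp add: vadd_def smul_def)
  qed
qed
context
  fixes n :: nat and \<mu> :: "(nat \<Rightarrow> real) measure" and N :: "(nat \<Rightarrow> real) \<Rightarrow> real"
  assumes lc: "log_concave n \<mu>" and sn: "seminorm_on n N" and int: "integrable \<mu> N"
begin

lemma sets_mu: "sets \<mu> = sets (Rn n)" using lc by (simp add: log_concave_def)
lemma space_mu: "space \<mu> = space (Rn n)" using sets_eq_imp_space_eq[OF sets_mu] .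
lemma ps: "prob_space \<mu>" using lc by (simp add: log_concave_def)

lemma N_meas[measurable]: "N \<in> borel_measurable \<mu>" using int by auto

lemma comp_meas[measurable]: "i < n \<Longrightarrow> (\<lambda>x. x i) \<in> borel_measurable \<mu>"
proof -
  assume i: "i < n"
  have "(\<lambda>x. x i) \<in> borel_measurable (Rn n)"
    unfolding Rn_def using i by (intro measurable_component_singleton) auto
  moreover have "measurable \<mu> (borel::real measure) = measurable (Rn n) borel" by (rule measurable_cong_sets[OF sets_mu refl])
  ultimately show ?thesis by simp
qed

lemma lc_ineq: "compact A \<Longrightarrow> compact B \<Longrightarrow> A \<subseteq> space \<mu> \<Longrightarrow> B \<subseteq> space \<mu> \<Longrightarrow> 0 < l \<Longrightarrow> l < 1 \<Longrightarrow>
  measure \<mu> A powr l * measure \<mu> B powr (1 - l) \<le>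
  measure \<mu> {vadd n (smul n l a) (smul n (1 - l) b) | a b. a \<in> A \<and> b \<in> B}"
  using lc unfolding log_concave_def space_mu by blast

lemma N_nonneg: "x \<in> space \<mu> \<Longrightarrow> 0 \<le> N x"
  using sn_nonneg[OF sn] space_mu by simp

abbreviation "E \<equiv> (\<integral>x. N x \<partial>\<mu>)"

lemma markov: "0 < c \<Longrightarrow> measure \<mu> {x\<in>space \<mu>. c \<le> N x} \<le> E / c"
  by (rule integral_Markov_inequality_measure[OF int, of "space \<mu>"]) (auto simp: N_nonneg)

lemma borell:
  assumes Epos: "0 < E" and S: "5 * E < S"
  shows "measure \<mu> {x\<in>space \<mu>. S \<le> N x} \<le> (1/2) powr ((S + 3 * E) / (8 * E))"
proof -
  interpret prob_space \<mu> by (rule ps)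
  define l where "l = 8 * E / (S + 3 * E)"
  have l0: "0 < l" and l1: "l < 1" using Epos S by (auto simp: l_def field_simps)
  have linv: "1 / l = (S + 3 * E) / (8 * E)" using Epos S by (simp add: l_def)
  define Hi where "Hi i = {x\<in>space \<mu>. S \<le> N x \<and> (\<forall>j<n. \<bar>x j\<bar> \<le> real i)}" for i :: nat
  define Lo where "Lo i = {x\<in>space \<mu>. N x \<le> 3 * E \<and> (\<forall>j<n. \<bar>x j\<bar> \<le> real i)}" for i :: nat
  have Hi_sets: "Hi i \<in> sets \<mu>" for i unfolding Hi_def by measurable
  have Lo_sets: "Lo i \<in> sets \<mu>" for i unfolding Lo_def by measurable
  have Hi_inc: "incseq Hi" unfolding Hi_def incseq_def by (force intro: order_trans)
  have Lo_inc: "incseq Lo" unfolding Lo_def incseq_def by (force intro: order_trans)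
  have bound_ex: "\<exists>i::nat. \<forall>j<n. \<bar>x j\<bar> \<le> real i" for x :: "nat \<Rightarrow> real"
  proof -
    obtain i :: nat where "(\<Sum>j<n. \<bar>x j\<bar>) \<le> real i" using real_arch_simple by blast
    moreover have "\<bar>x j\<bar> \<le> (\<Sum>j<n. \<bar>x j\<bar>)" if "j < n" for j
      using that by (intro member_le_sum) auto
    ultimately show ?thesis by (meson order_trans)
  qed
  have Hi_un: "(\<Union>i. Hi i) = {x\<in>space \<mu>. S \<le> N x}" unfolding Hi_def using bound_ex by blast
  have Lo_un: "(\<Union>i. Lo i) = {x\<in>space \<mu>. N x \<le> 3 * E}" unfolding Lo_def using bound_ex by blast
  have Hi_lim: "(\<lambda>i. measure \<mu> (Hi i)) \<longlonglongrightarrow> measure \<mu> {x\<in>space \<mu>. S \<le> N x}"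
    using finite_Lim_measure_incseq[of Hi] Hi_sets Hi_inc Hi_un by auto
  have Lo_lim: "(\<lambda>i. measure \<mu> (Lo i)) \<longlonglongrightarrow> measure \<mu> {x\<in>space \<mu>. N x \<le> 3 * E}"
    using finite_Lim_measure_incseq[of Lo] Lo_sets Lo_inc Lo_un by auto
  have low: "2/3 \<le> measure \<mu> {x\<in>space \<mu>. N x \<le> 3 * E}"
  proof -
    have m: "measure \<mu> {x\<in>space \<mu>. 3 * E \<le> N x} \<le> 1/3"
      using markov[of "3 * E"] Epos by simp
    have "{x\<in>space \<mu>. N x \<le> 3 * E} = space \<mu> - {x\<in>space \<mu>. 3 * E < N x}" by auto
    then have "measure \<mu> {x\<in>space \<mu>. N x \<le> 3 * E} = 1 - measure \<mu> {x\<in>space \<mu>. 3 * E < N x}"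
      by (simp add: prob_compl)
    moreover have "measure \<mu> {x\<in>space \<mu>. 3 * E < N x} \<le> measure \<mu> {x\<in>space \<mu>. 3 * E \<le> N x}"
      by (rule finite_measure_mono) auto
    ultimately show ?thesis using m by linarith
  qed
  have ev: "eventually (\<lambda>i. 1/2 < measure \<mu> (Lo i)) sequentially"
    using order_tendstoD(1)[OF Lo_lim, of "1/2"] low by simp
  have key: "eventually (\<lambda>i. measure \<mu> (Hi i) \<le> (1/2) powr (1 / l)) sequentially"
  proof (rule eventually_mono[OF ev])
    fix i assume Lo_big: "1/2 < measure \<mu> (Lo i)"
    let ?C = "{vadd n (smul n l a) (smul n (1 - l) b) | a b. a \<in> Hi i \<and> b \<in> Lo i}"
    have cHi: "compact (Hi i)" using compact_ge[OF sn, of S "real i"] unfolding Hi_def space_mu .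
    have cLo: "compact (Lo i)" using compact_le[OF sn, of "3 * E" "real i"] unfolding Lo_def space_mu .
    have "?C \<subseteq> {x\<in>space \<mu>. 4 * E \<le> N x}"
    proof safe
      fix a b assume a: "a \<in> Hi i" and b: "b \<in> Lo i"
      let ?z = "vadd n (smul n l a) (smul n (1 - l) b)"
      show "?z \<in> space \<mu>" by (simp add: space_mu)
      have as: "a \<in> space (Rn n)" and bs: "b \<in> space (Rn n)" using a b by (auto simp: Hi_def Lo_def space_mu)
      have eq: "smul n l a = vadd n ?z (smul n (l - 1) b)"
        by (rule comb_eq)
      have "N (smul n l a) \<le> N ?z + N (smul n (l - 1) b)"
        by (subst eq) (rule sn_tri[OF sn]; simp)
      moreover have "N (smul n l a) = l * N a" using sn_hom[OF sn as, of l] l0 by simp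
      moreover have "N (smul n (l - 1) b) = (1 - l) * N b" using sn_hom[OF sn bs, of "l - 1"] l1 by simp
      moreover have "S \<le> N a" "N b \<le> 3 * E" using a b by (auto simp: Hi_def Lo_def)
      ultimately have "l * S - (1 - l) * (3 * E) \<le> N ?z"
        using l0 l1 by (smt (verit, best) mult_left_mono)
      moreover have "l * S - (1 - l) * (3 * E) = 5 * E"
      proof -
        have "l * (S + 3 * E) = 8 * E" using Epos S by (simp add: l_def)
        then show ?thesis by (simp add: algebra_simps)
      qed
      ultimately show "4 * E \<le> N ?z" using Epos by simp
    qed
    then have "measure \<mu> ?C \<le> measure \<mu> {x\<in>space \<mu>. 4 * E \<le> N x}"
      by (intro finite_measure_mono) auto
    also have "\<dots> \<le> 1/4" using markov[of "4 * E"] Epos by simp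
    finally have C14: "measure \<mu> ?C \<le> 1/4" .
    have "measure \<mu> (Hi i) powr l * measure \<mu> (Lo i) powr (1 - l) \<le> measure \<mu> ?C"
      by (rule lc_ineq[OF cHi cLo _ _ l0 l1]) (auto simp: Hi_def Lo_def)
    moreover have "1/2 \<le> measure \<mu> (Lo i) powr (1 - l)"
    proof -
      have "(1/2::real) = (1/2) powr 1" by simp
      also have "\<dots> \<le> (1/2) powr (1 - l)" using l0 by (intro powr_mono') auto
      finally have "(1/2::real) \<le> (1/2) powr (1 - l)" .
      also have "\<dots> \<le> measure \<mu> (Lo i) powr (1 - l)"
        using Lo_big l1 by (intro powr_mono2) auto
      finally show ?thesis .
    qed
    ultimately have "measure \<mu> (Hi i) powr l * (1/2) \<le> 1/4"
    proof -
      assume a1: "measure \<mu> (Hi i) powr l * measure \<mu> (Lo i) powr (1 - l) \<le> measure \<mu> ?C"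
        and a2: "1/2 \<le> measure \<mu> (Lo i) powr (1 - l)"
      have "measure \<mu> (Hi i) powr l * (1/2) \<le> measure \<mu> (Hi i) powr l * measure \<mu> (Lo i) powr (1 - l)"
        using a2 by (intro mult_left_mono) auto
      then show ?thesis using a1 C14 by linarith
    qed
    then have hl: "measure \<mu> (Hi i) powr l \<le> 1/2" by simp
    have "measure \<mu> (Hi i) = (measure \<mu> (Hi i) powr l) powr (1 / l)"
      using l0 by (simp add: powr_powr)
    also have "\<dots> \<le> (1/2) powr (1 / l)"
      using hl l0 by (intro powr_mono2) auto
    finally show "measure \<mu> (Hi i) \<le> (1/2) powr (1 / l)" .
  qed
  have "measure \<mu> {x\<in>space \<mu>. S \<le> N x} \<le> (1/2) powr (1 / l)"
    by (rule tendsto_le[OF _ tendsto_const Hi_lim key]) simp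
  then show ?thesis using linv by simp
qed

end

lemma edist_ge: "i < n \<Longrightarrow> \<bar>x i - a i\<bar> \<le> edist n x a"
proof -
  assume i: "i < n"
  have "(x i - a i)\<^sup>2 \<le> (\<Sum>j<n. (x j - a j)\<^sup>2)"
    using i by (intro member_le_sum) auto
  then have "sqrt ((x i - a i)\<^sup>2) \<le> edist n x a"
    unfolding edist_def by (rule real_sqrt_le_mono)
  then show ?thesis by simp
qed

lemma enbhd_half:
  assumes n: "0 < n" and sg: "\<sigma> = 1 \<or> \<sigma> = -1" and e: "0 < e"
  shows "enbhd n {x\<in>space (Rn n). \<sigma> * x 0 \<le> s} e = {x\<in>space (Rn n). \<sigma> * x 0 < s + e}"
proof (intro equalityI subsetI)
  fix x assume "x \<in> enbhd n {x\<in>space (Rn n). \<sigma> * x 0 \<le> s} e"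
  then obtain a where x: "x \<in> space (Rn n)" and a: "a \<in> space (Rn n)" "\<sigma> * a 0 \<le> s"
    and d: "edist n x a < e" unfolding enbhd_def by blast
  have "\<bar>x 0 - a 0\<bar> < e" using edist_ge[OF n, of x a] d by simp
  then have "\<sigma> * x 0 < s + e" using sg a by (auto simp: abs_less_iff)
  then show "x \<in> {x\<in>space (Rn n). \<sigma> * x 0 < s + e}" using x by simp
next
  fix x assume "x \<in> {x\<in>space (Rn n). \<sigma> * x 0 < s + e}"
  then have x: "x \<in> space (Rn n)" and lt: "\<sigma> * x 0 < s + e" by auto
  define t where "t = max 0 (\<sigma> * x 0 - s)"
  define a where "a = x(0 := x 0 - \<sigma> * t)"
  have a_sp: "a \<in> space (Rn n)" using x n by (auto simp: a_def space_Rn PiE_iff extensional_def)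
  have ss: "\<sigma> * \<sigma> = 1" using sg by auto
  have "\<sigma> * a 0 = \<sigma> * x 0 - t" by (simp add: a_def algebra_simps ss)
  then have a_le: "\<sigma> * a 0 \<le> s" by (simp add: t_def)
  have "(\<Sum>j<n. (x j - a j)\<^sup>2) = (\<Sum>j<n. if j = 0 then t\<^sup>2 else 0)"
    by (rule sum.cong) (auto simp: a_def power2_eq_square ss algebra_simps)
  also have "\<dots> = t\<^sup>2" using n by simp
  finally have "edist n x a = t" by (simp add: edist_def t_def)
  then have "edist n x a < e" using lt e by (simp add: t_def)
  then show "x \<in> enbhd n {x\<in>space (Rn n). \<sigma> * x 0 \<le> s} e"
    unfolding enbhd_def using x a_sp a_le by blast
qed

lemma exp_le_1_2: assumes "0 \<le> (y::real)" "y \<le> 1/2" shows "exp y \<le> 1 + 2 * y"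
proof -
  have "1 - y \<le> exp (- y)" using exp_ge_add_one_self[of "-y"] by simp
  then have "exp y * (1 - y) \<le> 1" using assms by (simp add: exp_minus field_simps)
  moreover have "1 \<le> (1 + 2 * y) * (1 - y)"
  proof -
    have "y * (2 * y) \<le> y * 1" using assms by (intro mult_left_mono) auto
    then show ?thesis by (simp add: algebra_simps)
  qed
  ultimately have "exp y * (1 - y) \<le> (1 + 2 * y) * (1 - y)" by linarith
  then show ?thesis using assms by (simp add: mult_le_cancel_right)
qed

lemma tail_bound:
  fixes M :: "'a measure" and f :: "'a \<Rightarrow> real" and h :: real
  assumes ps: "prob_space M" and fm[measurable]: "f \<in> borel_measurable M" and h: "0 < h"
  and H: "\<And>g s. g \<in> {f, \<lambda>x. - f x} \<Longrightarrow> 0 < measure M {x\<in>space M. g x \<le> s} \<Longrightarrow>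
        measure M {x\<in>space M. g x \<le> s} < 1 \<Longrightarrow>
        \<exists>d>0. \<forall>e. 0 < e \<and> e < d \<longrightarrow>
          h * min (measure M {x\<in>space M. g x \<le> s}) (1 - measure M {x\<in>space M. g x \<le> s}) * e
            < measure M {x\<in>space M. g x < s + e} - measure M {x\<in>space M. g x \<le> s}"
  and a: "measure M {x\<in>space M. a \<le> f x} \<le> 1/2" and ab: "a \<le> b"
  shows "measure M {x\<in>space M. b < f x} * exp (h/4 * (b - a)) \<le> measure M {x\<in>space M. a < f x}"
proof -
  interpret prob_space M by (rule ps)
  define P where "P s = measure M {x\<in>space M. s < f x}" for s
  define Q where "Q s = measure M {x\<in>space M. s \<le> f x}" for s
  define \<kappa> where "\<kappa> = h / 4"
  have \<kappa>: "0 < \<kappa>" using h by (simp add: \<kappa>_def)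
  have P_mono: "s \<le> t \<Longrightarrow> P t \<le> P s" for s t unfolding P_def by (intro finite_measure_mono) auto
  have Q_mono: "s \<le> t \<Longrightarrow> Q t \<le> Q s" for s t unfolding Q_def by (intro finite_measure_mono) auto
  have PQ: "P s \<le> Q s" for s unfolding P_def Q_def by (intro finite_measure_mono) auto
  have QP: "s < t \<Longrightarrow> Q t \<le> P s" for s t unfolding P_def Q_def by (intro finite_measure_mono) auto
  have P0: "0 \<le> P s" for s by (simp add: P_def)
  have right: "\<exists>d>0. \<forall>e. 0 < e \<and> e < d \<longrightarrow> Q (x + e) < P x * (1 - h * e)"
    if Px: "0 < P x" and Qx: "Q x \<le> 1/2" for x
  proof -
    have c: "measure M {y\<in>space M. f y \<le> x} = 1 - P x"
    proof -
      have "{y\<in>space M. f y \<le> x} = space M - {y\<in>space M. x < f y}" by auto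
      then show ?thesis by (simp add: prob_compl P_def)
    qed
    have lt: "measure M {y\<in>space M. f y < x + e} = 1 - Q (x + e)" for e
    proof -
      have "{y\<in>space M. f y < x + e} = space M - {y\<in>space M. x + e \<le> f y}" by auto
      then show ?thesis by (simp add: prob_compl Q_def)
    qed
    have "P x \<le> 1/2" using PQ[of x] Qx by simp
    then have m: "min (1 - P x) (1 - (1 - P x)) = P x" by simp
    obtain d where d: "d > 0" and hd: "\<forall>e. 0 < e \<and> e < d \<longrightarrow>
          h * min (1 - P x) (1 - (1 - P x)) * e < (1 - Q (x + e)) - (1 - P x)"
      using H[of f x] c lt Px \<open>P x \<le> 1/2\<close> by force
    show ?thesis
    proof (intro exI[of _ d] conjI allI impI d)
      fix e assume "0 < e \<and> e < d"
      then have "h * P x * e < (1 - Q (x + e)) - (1 - P x)" using hd m by metis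
      then show "Q (x + e) < P x * (1 - h * e)" by (simp add: algebra_simps)
    qed
  qed
  have left: "\<exists>d>0. \<forall>e. 0 < e \<and> e < d \<longrightarrow> Q x * (1 + h * e) < P (x - e)"
    if Px: "0 < P x" and Qx: "Q x \<le> 1/2" for x
  proof -
    have c: "measure M {y\<in>space M. - f y \<le> - x} = Q x"
    proof -
      have "{y\<in>space M. - f y \<le> - x} = {y\<in>space M. x \<le> f y}" by auto
      then show ?thesis by (simp add: Q_def)
    qed
    have lt: "measure M {y\<in>space M. - f y < - x + e} = P (x - e)" for e
    proof -
      have "{y\<in>space M. - f y < - x + e} = {y\<in>space M. x - e < f y}" by auto
      then show ?thesis by (simp add: P_def)
    qed
    have Qpos: "0 < Q x" using PQ[of x] Px by simp
    then have m: "min (Q x) (1 - Q x) = Q x" using Qx by simp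
    obtain d where d: "d > 0" and hd: "\<forall>e. 0 < e \<and> e < d \<longrightarrow>
          h * min (Q x) (1 - Q x) * e < P (x - e) - Q x"
      using H[of "\<lambda>x. - f x" "- x"] c lt Qpos Qx by force
    show ?thesis
    proof (intro exI[of _ d] conjI allI impI d)
      fix e assume "0 < e \<and> e < d"
      then have "h * Q x * e < P (x - e) - Q x" using hd m by metis
      then show "Q x * (1 + h * e) < P (x - e)" by (simp add: algebra_simps)
    qed
  qed
  define R where "R u v \<longleftrightarrow> P (max v a) * exp (\<kappa> * (max v a - max u a)) \<le> P (max u a)" for u v
  have "R a b"
    using ab
  proof (induction rule: Bolzano)
    case (trans u v w)
    have "P (max w a) * exp (\<kappa> * (max w a - max u a)) =
          (P (max w a) * exp (\<kappa> * (max w a - max v a))) * exp (\<kappa> * (max v a - max u a))"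
      by (simp add: mult.assoc exp_add[symmetric] algebra_simps)
    also have "\<dots> \<le> P (max v a) * exp (\<kappa> * (max v a - max u a))"
      using trans(2) unfolding R_def by (intro mult_right_mono) auto
    also have "\<dots> \<le> P (max u a)" using trans(1) unfolding R_def by simp
    finally show ?case unfolding R_def .
  next
    case (local x)
    show ?case
    proof (cases "P x = 0")
      case True
      show ?thesis
      proof (intro exI[of _ 1] conjI allI impI)
        fix u v assume uv: "u \<le> x \<and> x \<le> v \<and> v - u < 1"
        have "P (max v a) \<le> P x" using uv local by (intro P_mono) auto
        then have "P (max v a) = 0" using True P0[of "max v a"] by simp
        then show "R u v" unfolding R_def by (simp add: P0)
      qed simp
    next
      case False
      then have Px: "0 < P x" using P0[of x] by simp
      have Qx: "Q x \<le> 1/2" using Q_mono[of a x] local a by (simp add: Q_def)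
      obtain d1 where d1: "d1 > 0" "\<forall>e. 0 < e \<and> e < d1 \<longrightarrow> Q (x + e) < P x * (1 - h * e)"
        using right[OF Px Qx] by blast
      obtain d2 where d2: "d2 > 0" "\<forall>e. 0 < e \<and> e < d2 \<longrightarrow> Q x * (1 + h * e) < P (x - e)"
        using left[OF Px Qx] by blast
      define d where "d = min d1 (min d2 (1 / (2 * \<kappa>)))"
      have d: "0 < d" using d1 d2 \<kappa> by (simp add: d_def)
      show ?thesis
      proof (intro exI[of _ d] conjI allI impI d)
        fix u v assume uv: "u \<le> x \<and> x \<le> v \<and> v - u < d"
        define u' where "u' = max u a"
        have v': "max v a = v" using uv local by simp
        define \<alpha> where "\<alpha> = x - u'"
        define \<beta> where "\<beta> = v - x"
        have \<alpha>: "0 \<le> \<alpha>" "\<alpha> < d" using uv local by (auto simp: \<alpha>_def u'_def)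
        have \<beta>: "0 \<le> \<beta>" "\<beta> < d" using uv local \<alpha> by (auto simp: \<beta>_def u'_def \<alpha>_def)
        have Pv: "P v \<le> P x * (1 - h * \<beta>)"
        proof (cases "\<beta> = 0")
          case True then show ?thesis by (simp add: \<beta>_def)
        next
          case False
          then have "Q (x + \<beta>) < P x * (1 - h * \<beta>)" using d1 \<beta> by (simp add: d_def)
          moreover have "P v \<le> Q (x + \<beta>)" using PQ by (simp add: \<beta>_def)
          ultimately show ?thesis by simp
        qed
        have Pu: "P x * (1 + h * \<alpha>) \<le> P u'"
        proof (cases "\<alpha> = 0")
          case True then show ?thesis by (simp add: \<alpha>_def)
        next
          case False
          then have "Q x * (1 + h * \<alpha>) < P (x - \<alpha>)" using d2 \<alpha> by (simp add: d_def)
          moreover have "P x * (1 + h * \<alpha>) \<le> Q x * (1 + h * \<alpha>)"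
            using PQ[of x] \<alpha> h by (intro mult_right_mono) auto
          ultimately show ?thesis by (simp add: \<alpha>_def)
        qed
        have e1: "(1 - h * \<beta>) * exp (\<kappa> * \<beta>) \<le> 1"
        proof -
          have "1 - \<kappa> * \<beta> \<le> exp (- (\<kappa> * \<beta>))" using exp_ge_add_one_self[of "- (\<kappa> * \<beta>)"] by simp
          moreover have "1 - h * \<beta> \<le> 1 - \<kappa> * \<beta>" using \<beta> h by (simp add: \<kappa>_def mult_right_mono)
          ultimately have "1 - h * \<beta> \<le> exp (- (\<kappa> * \<beta>))" by linarith
          then have "(1 - h * \<beta>) * exp (\<kappa> * \<beta>) \<le> exp (- (\<kappa> * \<beta>)) * exp (\<kappa> * \<beta>)"
            by (intro mult_right_mono) auto
          then show ?thesis by (simp add: exp_add[symmetric])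
        qed
        have e2: "exp (\<kappa> * \<alpha>) \<le> 1 + h * \<alpha>"
        proof -
          have "\<kappa> * \<alpha> \<le> 1/2"
          proof -
            have "\<alpha> \<le> 1 / (2 * \<kappa>)" using \<alpha> by (simp add: d_def)
            then have "\<kappa> * \<alpha> \<le> \<kappa> * (1 / (2 * \<kappa>))" using \<kappa> by (intro mult_left_mono) auto
            then show ?thesis using \<kappa> by simp
          qed
          then have "exp (\<kappa> * \<alpha>) \<le> 1 + 2 * (\<kappa> * \<alpha>)" using \<alpha> \<kappa> by (intro exp_le_1_2) auto
          also have "\<dots> \<le> 1 + h * \<alpha>" using \<alpha> h by (simp add: \<kappa>_def)
          finally show ?thesis .
        qed
        have "P v * exp (\<kappa> * (v - u')) = (P v * exp (\<kappa> * \<beta>)) * exp (\<kappa> * \<alpha>)"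
          by (simp add: \<alpha>_def \<beta>_def exp_add[symmetric] algebra_simps)
        also have "\<dots> \<le> (P x * (1 - h * \<beta>) * exp (\<kappa> * \<beta>)) * exp (\<kappa> * \<alpha>)"
          using Pv by (intro mult_right_mono) auto
        also have "\<dots> \<le> P x * exp (\<kappa> * \<alpha>)"
          using e1 Px by (simp add: mult.assoc mult_left_le)
        also have "\<dots> \<le> P x * (1 + h * \<alpha>)" using e2 Px by (intro mult_left_mono) auto
        also have "\<dots> \<le> P u'" by (rule Pu)
        finally show "R u v" unfolding R_def v' u'_def .
      qed
    qed
  qed
  then show ?thesis using ab by (simp add: R_def P_def \<kappa>_def)
qed

lemma sq_le_pow4: "(real j + 2)\<^sup>2 \<le> 4 * 4 ^ j"
proof (induction j)
  case 0 then show ?case by simp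
next
  case (Suc j)
  have "(real (Suc j) + 2)\<^sup>2 \<le> 4 * (real j + 2)\<^sup>2" by (simp add: power2_eq_square algebra_simps)
  also have "\<dots> \<le> 4 * (4 * 4 ^ j)" using Suc by simp
  finally show ?case by simp
qed

lemma term_le_suminf: fixes f :: "nat \<Rightarrow> ennreal" shows "f i \<le> suminf f"
proof (rule ccontr)
  assume "\<not> f i \<le> suminf f"
  then have "suminf f < f i" by simp
  then have "f i < f i" by (rule ennreal_suminf_lessD)
  then show False by simp
qed

lemma pointwise_sq:
  assumes "0 \<le> (y::real)"
  shows "ennreal (y\<^sup>2) \<le> ennreal (1/4) + (\<Sum>j. ennreal ((real j + 2)\<^sup>2 / 4) * indicator {z. (real j + 1) / 2 < z} y)"
proof (cases "y \<le> 1/2")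
  case True
  then have "y\<^sup>2 \<le> (1/2)\<^sup>2" using assms by (intro power_mono) auto
  then have "ennreal (y\<^sup>2) \<le> ennreal (1/4)" by (simp add: power2_eq_square)
  then show ?thesis by (rule add_increasing2[OF zero_le])
next
  case False
  define j where "j = nat (ceiling (2 * y) - 2)"
  have "1 < 2 * y" using False by simp
  then have "1 < ceiling (2 * y)" by (simp add: less_ceiling_iff)
  then have c2: "2 \<le> ceiling (2 * y)" by simp
  have jr: "real j = real_of_int (ceiling (2 * y)) - 2" using c2 by (simp add: j_def)
  have lt: "(real j + 1) / 2 < y" using jr ceiling_correct[of "2*y"] by simp
  have le: "y \<le> (real j + 2) / 2"
  proof -
    have "real j + 2 = real_of_int (ceiling (2 * y))" using jr by simp
    moreover have "2 * y \<le> real_of_int (ceiling (2 * y))" by (rule le_of_int_ceiling)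
    ultimately show ?thesis by (simp add: field_simps)
  qed
  have "y\<^sup>2 \<le> ((real j + 2) / 2)\<^sup>2" using le assms by (intro power_mono) auto
  then have "ennreal (y\<^sup>2) \<le> ennreal ((real j + 2)\<^sup>2 / 4) * indicator {z. (real j + 1) / 2 < z} y"
    using lt by (simp add: power_divide)
  also have "\<dots> \<le> (\<Sum>j. ennreal ((real j + 2)\<^sup>2 / 4) * indicator {z. (real j + 1) / 2 < z} y)"
    by (rule term_le_suminf[of "\<lambda>j. ennreal ((real j + 2)\<^sup>2 / 4) * indicator {z. (real j + 1) / 2 < z} y"])
  also have "\<dots> \<le> ennreal (1/4) + \<dots>" by simp
  finally show ?thesis .
qed

lemma second_moment_bound:
  fixes M :: "'a measure" and Y :: "'a \<Rightarrow> real"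
  assumes ps: "prob_space M" and Ym[measurable]: "Y \<in> borel_measurable M"
    and Y0: "\<And>x. x \<in> space M \<Longrightarrow> 0 \<le> Y x"
    and int: "integrable M (\<lambda>x. (Y x)\<^sup>2)"
    and tail: "\<And>r. 0 \<le> r \<Longrightarrow> measure M {x\<in>space M. 1/4 + r < Y x} \<le> exp (- 40 * r)"
  shows "(\<integral>x. (Y x)\<^sup>2 \<partial>M) \<le> 1/2"
proof -
  interpret prob_space M by (rule ps)
  define c where "c j = (real j + 2)\<^sup>2 / 4" for j :: nat
  define B where "B j = {x\<in>space M. (real j + 1) / 2 < Y x}" for j :: nat
  have Bs[measurable]: "B j \<in> sets M" for j unfolding B_def by measurable
  have trm: "ennreal (c j) * emeasure M (B j) \<le> ennreal (exp (-10) * (1/2) ^ j)" for j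
  proof -
    have "measure M (B j) \<le> exp (- 40 * ((real j + 1) / 2 - 1/4))"
      using tail[of "(real j + 1) / 2 - 1/4"] unfolding B_def by simp
    also have "- 40 * ((real j + 1) / 2 - 1/4) = -10 + real j * (-20)" by (simp add: field_simps)
    also have "exp (-10 + real j * (-20)) = exp (-10) * exp (-20) ^ j"
      unfolding exp_add exp_of_nat_mult ..
    finally have mB: "measure M (B j) \<le> exp (-10) * exp (-20) ^ j" .
    have e20: "exp (-20::real) \<le> 1/8"
    proof -
      have "(8::real) \<le> 1 + 20" by simp
      also have "\<dots> \<le> exp 20" by (rule exp_ge_add_one_self)
      finally show ?thesis by (simp add: exp_minus field_simps)
    qed
    have "c j * measure M (B j) \<le> (4 ^ j) * (exp (-10) * exp (-20) ^ j)"
      using sq_le_pow4[of j] mB by (intro mult_mono) (auto simp: c_def)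
    also have "\<dots> \<le> 4 ^ j * (exp (-10) * (1/8) ^ j)"
      using e20 by (intro mult_left_mono power_mono) auto
    also have "\<dots> = exp (-10) * (4 * (1/8)) ^ j" by (simp only: power_mult_distrib mult_ac)
    also have "\<dots> = exp (-10) * (1/2) ^ j" by simp
    finally have "c j * measure M (B j) \<le> exp (-10) * (1/2) ^ j" .
    then show ?thesis
      by (simp add: emeasure_eq_measure c_def ennreal_mult[symmetric])
  qed
  have "ennreal (\<integral>x. (Y x)\<^sup>2 \<partial>M) = (\<integral>\<^sup>+x. ennreal ((Y x)\<^sup>2) \<partial>M)"
    by (rule nn_integral_eq_integral[symmetric, OF int]) auto
  also have "\<dots> \<le> (\<integral>\<^sup>+x. ennreal (1/4) + (\<Sum>j. ennreal (c j) * indicator (B j) x) \<partial>M)"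
  proof (rule nn_integral_mono)
    fix x assume x: "x \<in> space M"
    have "(\<Sum>j. ennreal (c j) * indicator (B j) x) = (\<Sum>j. ennreal ((real j + 2)\<^sup>2 / 4) * indicator {z. (real j + 1) / 2 < z} (Y x))"
      using x by (simp add: B_def c_def indicator_def)
    then show "ennreal ((Y x)\<^sup>2) \<le> ennreal (1/4) + (\<Sum>j. ennreal (c j) * indicator (B j) x)"
      using pointwise_sq[OF Y0[OF x]] by simp
  qed
  also have "\<dots> = ennreal (1/4) + (\<Sum>j. ennreal (c j) * emeasure M (B j))"
    by (simp add: nn_integral_add nn_integral_suminf nn_integral_cmult_indicator emeasure_space_1)
  also have "\<dots> \<le> ennreal (1/4) + (\<Sum>j. ennreal (exp (-10) * (1/2) ^ j))"
    using trm by (intro add_left_mono suminf_le) auto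
  also have "(\<Sum>j. ennreal (exp (-10) * (1/2) ^ j)) = ennreal (\<Sum>j. exp (-10) * (1/2) ^ j)"
    by (rule suminf_ennreal2) (auto intro: summable_mult summable_geometric)
  also have "(\<Sum>j. exp (-10) * (1/2::real) ^ j) = exp (-10) * 2"
    by (simp add: suminf_mult suminf_geometric summable_geometric)
  also have "exp (-10) * 2 \<le> (1/4::real)"
  proof -
    have "(8::real) \<le> 1 + 10" by simp
    also have "\<dots> \<le> exp 10" by (rule exp_ge_add_one_self)
    finally show ?thesis by (simp add: exp_minus field_simps)
  qed
  then have "ennreal (1/4) + ennreal (exp (-10) * 2) \<le> ennreal (1/4) + ennreal (1/4)"
    by (intro add_left_mono ennreal_leI)
  finally have fin: "ennreal (\<integral>x. (Y x)\<^sup>2 \<partial>M) \<le> ennreal (1/2)"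
    by (simp add: ennreal_plus[symmetric] del: ennreal_plus)
  have z: "(0::real) \<le> 1/2" by simp
  show ?thesis using iffD1[OF ennreal_le_iff[OF z]] fin by blast
qed

lemma small_inv: "0 < (x::real) \<Longrightarrow> \<exists>k. inverse (real (Suc k)) < x"
proof -
  assume "0 < x"
  then obtain n where "0 < n" "inverse (of_nat n) < x" using ex_inverse_of_nat_less by blast
  then show ?thesis by (metis Suc_pred)
qed

lemma median_exists:
  fixes M :: "'a measure" and f :: "'a \<Rightarrow> real"
  assumes ps: "prob_space M" and fm[measurable]: "f \<in> borel_measurable M"
  shows "\<exists>m. measure M {x\<in>space M. m < f x} \<le> 1/2 \<and> measure M {x\<in>space M. f x < m} \<le> 1/2"
proof -
  interpret prob_space M by (rule ps)
  define F where "F s = measure M {x\<in>space M. f x \<le> s}" for s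
  define S where "S = {s. 1/2 \<le> F s}"
  have F_mono: "s \<le> t \<Longrightarrow> F s \<le> F t" for s t unfolding F_def by (intro finite_measure_mono) auto
  have up: "(\<lambda>k. F (real k)) \<longlonglongrightarrow> 1"
  proof -
    have "(\<lambda>k. measure M {x\<in>space M. f x \<le> real k}) \<longlonglongrightarrow> measure M (\<Union>k. {x\<in>space M. f x \<le> real k})"
      by (intro finite_Lim_measure_incseq) (auto simp: incseq_def intro: order_trans)
    moreover have "(\<Union>k. {x\<in>space M. f x \<le> real k}) = space M"
      using real_arch_simple by blast
    ultimately show ?thesis by (simp add: F_def prob_space)
  qed
  have down: "(\<lambda>k. F (- real k)) \<longlonglongrightarrow> 0"
  proof -
    have "(\<lambda>k. measure M {x\<in>space M. f x \<le> - real k}) \<longlonglongrightarrow> measure M (\<Inter>k. {x\<in>space M. f x \<le> - real k})"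
      by (intro finite_Lim_measure_decseq) (auto simp: decseq_def intro: order_trans)
    moreover have "(\<Inter>k. {x\<in>space M. f x \<le> - real k}) = {}"
    proof -
      have "\<exists>k. \<not> f x \<le> - real k" for x
      proof -
        obtain k where "- f x < real k" using reals_Archimedean2 by blast
        then show ?thesis by (intro exI[of _ k]) simp
      qed
      then show ?thesis by blast
    qed
    ultimately show ?thesis by (simp add: F_def)
  qed
  obtain k1 where k1: "1/2 < F (real k1)"
    using order_tendstoD(1)[OF up, of "1/2"] by (auto dest: eventually_happens)
  obtain k2 where k2: "F (- real k2) < 1/2"
    using order_tendstoD(2)[OF down, of "1/2"] by (auto dest: eventually_happens)
  have "real k1 \<in> S" using k1 by (simp add: S_def)
  then have Sne: "S \<noteq> {}" by blast
  have lb: "- real k2 \<le> s" if "s \<in> S" for s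
  proof (rule ccontr)
    assume "\<not> - real k2 \<le> s"
    then have "F s \<le> F (- real k2)" by (intro F_mono) simp
    then show False using that k2 by (simp add: S_def)
  qed
  have bdd: "bdd_below S" using lb by (auto simp: bdd_below_def)
  define m where "m = Inf S"
  have Fm: "1/2 \<le> F m"
  proof -
    have lim: "(\<lambda>k. measure M {x\<in>space M. f x \<le> m + inverse (real (Suc k))}) \<longlonglongrightarrow>
        measure M (\<Inter>k. {x\<in>space M. f x \<le> m + inverse (real (Suc k))})"
    proof (intro finite_Lim_measure_decseq)
      show "decseq (\<lambda>k. {x\<in>space M. f x \<le> m + inverse (real (Suc k))})"
        unfolding decseq_def
      proof (intro allI impI subsetI)
        fix i j x assume ij: "i \<le> j" and x: "x \<in> {x\<in>space M. f x \<le> m + inverse (real (Suc j))}"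
        have inv: "inverse (real (Suc j)) \<le> inverse (real (Suc i))" using ij by (simp add: le_imp_inverse_le)
        have x1: "x \<in> space M" and x2: "f x \<le> m + inverse (real (Suc j))" using x by auto
        have "f x \<le> m + inverse (real (Suc i))" using x2 inv by linarith
        then show "x \<in> {x\<in>space M. f x \<le> m + inverse (real (Suc i))}" using x1 by simp
      qed
    qed auto
    have eq: "(\<Inter>k. {x\<in>space M. f x \<le> m + inverse (real (Suc k))}) = {x\<in>space M. f x \<le> m}"
    proof (intro equalityI subsetI)
      fix x assume x: "x \<in> (\<Inter>k. {x\<in>space M. f x \<le> m + inverse (real (Suc k))})"
      show "x \<in> {x\<in>space M. f x \<le> m}"
      proof (rule ccontr)
        assume "x \<notin> {x\<in>space M. f x \<le> m}"
        then have "0 < f x - m" using x by auto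
        then obtain k where k: "inverse (real (Suc k)) < f x - m" using small_inv by blast
        have "f x \<le> m + inverse (real (Suc k))" using x by blast
        then show False using k by linarith
      qed
    next
      fix x assume "x \<in> {x\<in>space M. f x \<le> m}"
      then show "x \<in> (\<Inter>k. {x\<in>space M. f x \<le> m + inverse (real (Suc k))})"
        by (auto intro: order_trans[OF _ add_increasing2[OF less_imp_le[OF positive_imp_inverse_positive]]])
    qed
    have each: "1/2 \<le> measure M {x\<in>space M. f x \<le> m + inverse (real (Suc k))}" for k
    proof -
      obtain s where s: "s \<in> S" "s < m + inverse (real (Suc k))"
        using cInf_lessD[OF Sne, of "m + inverse (real (Suc k))"] by (auto simp: m_def)
      then have "F s \<le> F (m + inverse (real (Suc k)))" by (intro F_mono) simp
      then show ?thesis using s by (simp add: S_def F_def)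
    qed
    have "1/2 \<le> measure M (\<Inter>k. {x\<in>space M. f x \<le> m + inverse (real (Suc k))})"
      by (rule LIMSEQ_le_const[OF lim]) (use each in blast)
    then show ?thesis unfolding eq F_def .
  qed
  have r: "measure M {x\<in>space M. m < f x} \<le> 1/2"
  proof -
    have "{x\<in>space M. m < f x} = space M - {x\<in>space M. f x \<le> m}" by auto
    then have "measure M {x\<in>space M. m < f x} = 1 - F m" by (simp add: prob_compl F_def)
    then show ?thesis using Fm by simp
  qed
  have l: "measure M {x\<in>space M. f x < m} \<le> 1/2"
  proof -
    have lim: "(\<lambda>k. measure M {x\<in>space M. f x \<le> m - inverse (real (Suc k))}) \<longlonglongrightarrow>
        measure M (\<Union>k. {x\<in>space M. f x \<le> m - inverse (real (Suc k))})"
    proof (intro finite_Lim_measure_incseq)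
      show "incseq (\<lambda>k. {x\<in>space M. f x \<le> m - inverse (real (Suc k))})"
        unfolding incseq_def
      proof (intro allI impI subsetI)
        fix i j x assume ij: "i \<le> j" and x: "x \<in> {x\<in>space M. f x \<le> m - inverse (real (Suc i))}"
        have inv: "inverse (real (Suc j)) \<le> inverse (real (Suc i))" using ij by (simp add: le_imp_inverse_le)
        have x1: "x \<in> space M" and x2: "f x \<le> m - inverse (real (Suc i))" using x by auto
        have "f x \<le> m - inverse (real (Suc j))" using x2 inv by linarith
        then show "x \<in> {x\<in>space M. f x \<le> m - inverse (real (Suc j))}" using x1 by simp
      qed
    qed auto
    have eq: "(\<Union>k. {x\<in>space M. f x \<le> m - inverse (real (Suc k))}) = {x\<in>space M. f x < m}"
    proof (intro equalityI subsetI)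
      fix x assume "x \<in> (\<Union>k. {x\<in>space M. f x \<le> m - inverse (real (Suc k))})"
      then obtain k where k1: "x \<in> space M" and k2: "f x \<le> m - inverse (real (Suc k))" by auto
      have "0 < inverse (real (Suc k))" by simp
      then have "f x < m" using k2 by linarith
      then show "x \<in> {x\<in>space M. f x < m}" using k1 by simp
    next
      fix x assume x: "x \<in> {x\<in>space M. f x < m}"
      then obtain k where k: "inverse (real (Suc k)) < m - f x" using small_inv[of "m - f x"] by auto
      then have "f x \<le> m - inverse (real (Suc k))" by linarith
      then show "x \<in> (\<Union>k. {x\<in>space M. f x \<le> m - inverse (real (Suc k))})" using x by blast
    qed
    have each: "measure M {x\<in>space M. f x \<le> m - inverse (real (Suc k))} \<le> 1/2" for k
    proof (rule ccontr)
      assume "\<not> ?thesis"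
      then have "m - inverse (real (Suc k)) \<in> S" by (simp add: S_def F_def)
      then have "m \<le> m - inverse (real (Suc k))" unfolding m_def by (rule cInf_lower[OF _ bdd])
      then show False by simp
    qed
    have "measure M (\<Union>k. {x\<in>space M. f x \<le> m - inverse (real (Suc k))}) \<le> 1/2"
      by (rule LIMSEQ_le_const2[OF lim]) (use each in blast)
    then show ?thesis unfolding eq .
  qed
  show ?thesis using r l by blast
qed

lemma cheeger_le:
  assumes n: "0 < n" and sets_mu: "sets \<mu> = sets (Rn n)" and ps: "prob_space \<mu>" and iso: "isotropic n \<mu>"
  shows "cheeger n \<mu> \<le> ereal 160"
proof (rule ccontr)
  assume "\<not> cheeger n \<mu> \<le> ereal 160"
  then have ch: "ereal 160 < cheeger n \<mu>" by simp
  interpret prob_space \<mu> by (rule ps)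
  have space_mu: "space \<mu> = space (Rn n)" using sets_eq_imp_space_eq[OF sets_mu] .
  have X[measurable]: "(\<lambda>x. x 0) \<in> borel_measurable \<mu>"
  proof -
    have "(\<lambda>x. x 0) \<in> borel_measurable (Rn n)"
      unfolding Rn_def using n by (intro measurable_component_singleton) auto
    moreover have "measurable \<mu> (borel::real measure) = measurable (Rn n) borel" by (rule measurable_cong_sets[OF sets_mu refl])
    ultimately show ?thesis by simp
  qed
  have intX: "integrable \<mu> (\<lambda>x. x 0)" and EX: "(\<integral>x. x 0 \<partial>\<mu>) = 0"
    and intXX: "integrable \<mu> (\<lambda>x. x 0 * x 0)" and EXX: "(\<integral>x. x 0 * x 0 \<partial>\<mu>) = 1"
    using iso n unfolding isotropic_def by auto
  have Hs: "\<exists>d>0. \<forall>e. 0 < e \<and> e < d \<longrightarrow>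
          160 * min (measure \<mu> {x\<in>space \<mu>. \<sigma> * x 0 \<le> s}) (1 - measure \<mu> {x\<in>space \<mu>. \<sigma> * x 0 \<le> s}) * e
            < measure \<mu> {x\<in>space \<mu>. \<sigma> * x 0 < s + e} - measure \<mu> {x\<in>space \<mu>. \<sigma> * x 0 \<le> s}"
    if sg: "\<sigma> = 1 \<or> \<sigma> = -1" and p0: "0 < measure \<mu> {x\<in>space \<mu>. \<sigma> * x 0 \<le> s}"
      and p1: "measure \<mu> {x\<in>space \<mu>. \<sigma> * x 0 \<le> s} < 1" for \<sigma> s
  proof -
    define A where "A = {x\<in>space \<mu>. \<sigma> * x 0 \<le> s}"
    define mn where "mn = min (measure \<mu> A) (1 - measure \<mu> A)"
    have mn: "0 < mn" using p0 p1 by (simp add: mn_def A_def)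
    have A_sets: "A \<in> sets \<mu>" unfolding A_def by measurable
    have "cheeger n \<mu> \<le> boundary_measure n \<mu> A / ereal mn"
      unfolding cheeger_def mn_def using A_sets p0 p1 by (intro INF_lower) (auto simp: A_def)
    with ch have "ereal 160 < boundary_measure n \<mu> A / ereal mn" by simp
    then have "ereal mn * ereal 160 < boundary_measure n \<mu> A"
      using mn by (subst (asm) ereal_less_divide_pos) auto
    then have lt: "ereal (mn * 160) < Liminf (at_right 0) (\<lambda>e. ereal ((measure \<mu> (enbhd n A e) - measure \<mu> A) / e))"
      by (simp add: boundary_measure_def)
    have "eventually (\<lambda>e. ereal (mn * 160) < ereal ((measure \<mu> (enbhd n A e) - measure \<mu> A) / e)) (at_right 0)"
      using iffD1[OF le_Liminf_iff order_refl, rule_format, OF lt] .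
    then obtain b where b: "b > 0" and hb: "\<And>e. 0 < e \<Longrightarrow> e < b \<Longrightarrow>
        mn * 160 < (measure \<mu> (enbhd n A e) - measure \<mu> A) / e"
      unfolding eventually_at_right_field by auto
    show ?thesis
    proof (intro exI[of _ b] conjI allI impI b)
      fix e assume e: "0 < e \<and> e < b"
      have en: "enbhd n A e = {x\<in>space \<mu>. \<sigma> * x 0 < s + e}"
        unfolding A_def space_mu using enbhd_half[OF n sg, of e s] e by simp
      have "mn * 160 * e < measure \<mu> (enbhd n A e) - measure \<mu> A"
        using hb[of e] e by (simp add: pos_less_divide_eq)
      then show "160 * min (measure \<mu> {x\<in>space \<mu>. \<sigma> * x 0 \<le> s}) (1 - measure \<mu> {x\<in>space \<mu>. \<sigma> * x 0 \<le> s}) * e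
            < measure \<mu> {x\<in>space \<mu>. \<sigma> * x 0 < s + e} - measure \<mu> {x\<in>space \<mu>. \<sigma> * x 0 \<le> s}"
        unfolding en by (simp add: mn_def A_def algebra_simps)
    qed
  qed
  have H: "\<exists>d>0. \<forall>e. 0 < e \<and> e < d \<longrightarrow>
          160 * min (measure \<mu> {x\<in>space \<mu>. g x \<le> s}) (1 - measure \<mu> {x\<in>space \<mu>. g x \<le> s}) * e
            < measure \<mu> {x\<in>space \<mu>. g x < s + e} - measure \<mu> {x\<in>space \<mu>. g x \<le> s}"
    if g: "g = (\<lambda>x. x 0) \<or> g = (\<lambda>x. - x 0)" and p0: "0 < measure \<mu> {x\<in>space \<mu>. g x \<le> s}"
      and p1: "measure \<mu> {x\<in>space \<mu>. g x \<le> s} < 1" for g s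
    using g
  proof
    assume g1: "g = (\<lambda>x. x 0)"
    show ?thesis using Hs[of 1 s] p0 p1 unfolding g1 by simp
  next
    assume g1: "g = (\<lambda>x. - x 0)"
    show ?thesis using Hs[of "-1" s] p0 p1 unfolding g1 by simp
  qed
  obtain m where m1: "measure \<mu> {x\<in>space \<mu>. m < x 0} \<le> 1/2" and m2: "measure \<mu> {x\<in>space \<mu>. x 0 < m} \<le> 1/2"
    using median_exists[OF ps X] by blast
  have right: "measure \<mu> {x\<in>space \<mu>. m + 1/4 + r < x 0} \<le> 1/2 * exp (- 40 * r)" if r: "0 \<le> r" for r
  proof -
    have a: "measure \<mu> {x\<in>space \<mu>. m + 1/4 \<le> x 0} \<le> 1/2"
      proof -
      have "measure \<mu> {x\<in>space \<mu>. m + 1/4 \<le> x 0} \<le> measure \<mu> {x\<in>space \<mu>. m < x 0}" by (intro finite_measure_mono) auto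
      then show ?thesis using m1 by linarith
    qed
    have "measure \<mu> {x\<in>space \<mu>. m + 1/4 + r < x 0} * exp (160/4 * (m + 1/4 + r - (m + 1/4)))
        \<le> measure \<mu> {x\<in>space \<mu>. m + 1/4 < x 0}"
      by (rule tail_bound[OF ps X, of 160]) (use H a r in auto)
    also have "\<dots> \<le> 1/2" proof -
      have "measure \<mu> {x\<in>space \<mu>. m + 1/4 < x 0} \<le> measure \<mu> {x\<in>space \<mu>. m < x 0}" by (intro finite_measure_mono) auto
      then show ?thesis using m1 by linarith
    qed
    finally have "measure \<mu> {x\<in>space \<mu>. m + 1/4 + r < x 0} * exp (40 * r) \<le> 1/2" by simp
    then show ?thesis by (simp add: exp_minus field_simps)
  qed
  have left: "measure \<mu> {x\<in>space \<mu>. - m + 1/4 + r < - x 0} \<le> 1/2 * exp (- 40 * r)" if r: "0 \<le> r" for r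
  proof -
    have a: "measure \<mu> {x\<in>space \<mu>. - m + 1/4 \<le> - x 0} \<le> 1/2"
      proof -
      have "measure \<mu> {x\<in>space \<mu>. - m + 1/4 \<le> - x 0} \<le> measure \<mu> {x\<in>space \<mu>. x 0 < m}" by (intro finite_measure_mono) auto
      then show ?thesis using m2 by linarith
    qed
    have X': "(\<lambda>x. - x 0) \<in> borel_measurable \<mu>" by measurable
    have "measure \<mu> {x\<in>space \<mu>. - m + 1/4 + r < - x 0} * exp (160/4 * (- m + 1/4 + r - (- m + 1/4)))
        \<le> measure \<mu> {x\<in>space \<mu>. - m + 1/4 < - x 0}"
      by (rule tail_bound[OF ps X', of 160]) (use H a r in auto)
    also have "\<dots> \<le> 1/2" proof -
      have "measure \<mu> {x\<in>space \<mu>. - m + 1/4 < - x 0} \<le> measure \<mu> {x\<in>space \<mu>. x 0 < m}" by (intro finite_measure_mono) auto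
      then show ?thesis using m2 by linarith
    qed
    finally have "measure \<mu> {x\<in>space \<mu>. - m + 1/4 + r < - x 0} * exp (40 * r) \<le> 1/2" by simp
    then show ?thesis by (simp add: exp_minus field_simps)
  qed
  define Y where "Y x = \<bar>x 0 - m\<bar>" for x :: "nat \<Rightarrow> real"
  have Ym[measurable]: "Y \<in> borel_measurable \<mu>" unfolding Y_def by measurable
  have Ysq: "(Y x)\<^sup>2 = x 0 * x 0 - 2 * m * x 0 + m\<^sup>2" for x
    by (simp add: Y_def power2_eq_square algebra_simps)
  have intY: "integrable \<mu> (\<lambda>x. (Y x)\<^sup>2)"
    unfolding Ysq using intX intXX by auto
  have EY: "(\<integral>x. (Y x)\<^sup>2 \<partial>\<mu>) = 1 + m\<^sup>2"
    unfolding Ysq using intX intXX EX EXX by (simp add: prob_space)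
  have tl: "measure \<mu> {x\<in>space \<mu>. 1/4 + r < Y x} \<le> exp (- 40 * r)" if r: "0 \<le> r" for r
  proof -
    have "{x\<in>space \<mu>. 1/4 + r < Y x} \<subseteq> {x\<in>space \<mu>. m + 1/4 + r < x 0} \<union> {x\<in>space \<mu>. - m + 1/4 + r < - x 0}"
      by (auto simp: Y_def)
    then have "measure \<mu> {x\<in>space \<mu>. 1/4 + r < Y x} \<le> measure \<mu> ({x\<in>space \<mu>. m + 1/4 + r < x 0} \<union> {x\<in>space \<mu>. - m + 1/4 + r < - x 0})"
      by (intro finite_measure_mono) auto
    also have "\<dots> \<le> measure \<mu> {x\<in>space \<mu>. m + 1/4 + r < x 0} + measure \<mu> {x\<in>space \<mu>. - m + 1/4 + r < - x 0}"
      by (intro measure_Un_le) auto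
    also have "\<dots> \<le> exp (- 40 * r)" using right[OF r] left[OF r] by simp
    finally show ?thesis .
  qed
  have "(\<integral>x. (Y x)\<^sup>2 \<partial>\<mu>) \<le> 1/2"
    by (rule second_moment_bound[OF ps Ym _ intY tl]) (auto simp: Y_def)
  moreover have "0 \<le> m\<^sup>2" by simp
  ultimately show False using EY by linarith
qed

lemma id_meas: "(\<lambda>x. x) \<in> measurable (Rn n) (borel :: (nat \<Rightarrow> real) measure)"
proof (rule measurable_coordinatewise_then_product)
  fix i :: nat
  show "(\<lambda>x. x i) \<in> borel_measurable (Rn n)"
  proof (cases "i < n")
    case True
    then show ?thesis unfolding Rn_def by (intro measurable_component_singleton) auto
  next
    case False
    have "(\<lambda>x. x i) \<in> borel_measurable (Rn n) \<longleftrightarrow> (\<lambda>x. undefined::real) \<in> borel_measurable (Rn n)"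
      by (rule measurable_cong) (use False in \<open>auto simp: space_Rn PiE_def extensional_def\<close>)
    then show ?thesis by simp
  qed
qed

lemma enbhd_sets: "enbhd n A e \<in> sets (Rn n)"
proof -
  define U where "U = (\<Union>a\<in>A. {x. edist n x a < e})"
  have "open {x. edist n x a < e}" for a
  proof (rule open_Collect_less)
    show "continuous_on UNIV (\<lambda>x. edist n x a)" unfolding edist_def
      by (intro continuous_intros continuous_on_product_coordinates)
  qed simp
  then have "open U" unfolding U_def by blast
  then have "U \<in> sets borel" by simp
  then have "(\<lambda>x. x) -` U \<inter> space (Rn n) \<in> sets (Rn n)" using id_meas by (rule measurable_sets[rotated])
  moreover have "enbhd n A e = (\<lambda>x. x) -` U \<inter> space (Rn n)" unfolding enbhd_def U_def by auto
  ultimately show ?thesis by simp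
qed

lemma cheeger_nonneg:
  assumes sets_mu: "sets \<mu> = sets (Rn n)" and ps: "prob_space \<mu>"
  shows "0 \<le> cheeger n \<mu>"
  unfolding cheeger_def
proof (rule INF_greatest)
  interpret prob_space \<mu> by (rule ps)
  have space_mu: "space \<mu> = space (Rn n)" using sets_eq_imp_space_eq[OF sets_mu] .
  fix A assume A: "A \<in> {A \<in> sets \<mu>. 0 < measure \<mu> A \<and> measure \<mu> A < 1}"
  have bm: "0 \<le> boundary_measure n \<mu> A"
    unfolding boundary_measure_def le_Liminf_iff
  proof (intro allI impI)
    fix y :: ereal assume y: "y < 0"
    show "eventually (\<lambda>e. y < ereal ((measure \<mu> (enbhd n A e) - measure \<mu> A) / e)) (at_right 0)"
      unfolding eventually_at_right_field
    proof (intro exI[of _ 1] conjI allI impI)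
      fix e :: real assume e: "0 < e" "e < 1"
      have "A \<subseteq> enbhd n A e"
      proof
        fix x assume x: "x \<in> A"
        then have "x \<in> space (Rn n)" using A sets.sets_into_space space_mu by blast
        moreover have "edist n x x = 0" by (simp add: edist_def)
        ultimately show "x \<in> enbhd n A e" unfolding enbhd_def using x e by (auto intro!: bexI[of _ x])
      qed
      then have "measure \<mu> A \<le> measure \<mu> (enbhd n A e)"
        by (intro finite_measure_mono) (simp_all add: sets_mu enbhd_sets)
      then have "0 \<le> (measure \<mu> (enbhd n A e) - measure \<mu> A) / e" using e by simp
      then show "y < ereal ((measure \<mu> (enbhd n A e) - measure \<mu> A) / e)" using y
        by (meson ereal_less_eq(5) less_le_trans)
    qed simp
  qed
  have mn: "0 < min (measure \<mu> A) (1 - measure \<mu> A)" using A by simp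
  show "0 \<le> boundary_measure n \<mu> A / ereal (min (measure \<mu> A) (1 - measure \<mu> A))"
  proof (rule ereal_le_divide_pos[THEN iffD2])
    show "0 < ereal (min (measure \<mu> A) (1 - measure \<mu> A))" using mn by (simp only: ereal_less(2))
    show "ereal (min (measure \<mu> A) (1 - measure \<mu> A)) \<noteq> \<infinity>" by (rule PInfty_neq_ereal(1))
    show "ereal (min (measure \<mu> A) (1 - measure \<mu> A)) * 0 \<le> boundary_measure n \<mu> A" using bm by simp
  qed
qed

lemma psi_bound:
  assumes n: "0 < n"
  shows "psi n = 0 \<or> 1/160 \<le> psi n"
proof (cases "{\<mu>. log_concave n \<mu> \<and> isotropic n \<mu>} = {}")
  case True
  have "KLS n = bot" unfolding KLS_def True by simp
  then show ?thesis by (simp add: psi_def bot_ereal_def)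
next
  case False
  then obtain \<mu> where mu: "log_concave n \<mu>" "isotropic n \<mu>" by blast
  have s: "sets \<mu> = sets (Rn n)" and ps: "prob_space \<mu>" using mu by (auto simp: log_concave_def)
  have c0: "0 \<le> cheeger n \<mu>" by (rule cheeger_nonneg[OF s ps])
  have c1: "cheeger n \<mu> \<le> ereal 160" by (rule cheeger_le[OF n s ps mu(2)])
  have inv: "ereal (1/160) \<le> 1 / cheeger n \<mu>"
  proof (cases "cheeger n \<mu> = 0")
    case True then show ?thesis by (simp add: divide_ereal_def)
  next
    case False
    then obtain r where r: "cheeger n \<mu> = ereal r" "0 < r" "r \<le> 160"
      using c0 c1 by (cases "cheeger n \<mu>") auto
    have "1 / cheeger n \<mu> = ereal (1 / r)" using r by (simp add: one_ereal_def)
    moreover have "1 / 160 \<le> 1 / r" using r by (simp add: frac_le)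
    ultimately show ?thesis by simp
  qed
  also have "\<dots> \<le> KLS n" unfolding KLS_def using mu by (intro SUP_upper) auto
  finally have K: "ereal (1/160) \<le> KLS n" .
  show ?thesis
  proof (cases "KLS n")
    case (real r) then show ?thesis using K by (simp add: psi_def)
  next
    case PInf then show ?thesis by (simp add: psi_def)
  next
    case MInf then show ?thesis using K by simp
  qed
qed

lemma ln2_ge: "1/2 \<le> ln (2::real)"
proof -
  have "1 + (-1/2) \<le> exp (-1/2::real)" by (rule exp_ge_add_one_self)
  then have "exp (1/2::real) \<le> 2" by (simp add: exp_minus field_simps)
  then have "ln (exp (1/2::real)) \<le> ln 2" by (subst ln_le_cancel_iff) auto
  then show ?thesis by simp
qed

theorem corollary1p9:
  "\<exists>c>0. \<forall>n \<mu> N t.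
     log_concave n \<mu> \<and> symmetric_measure n \<mu> \<and> seminorm_on n N \<and> t > 0 \<longrightarrow>
     measure \<mu> {x \<in> space \<mu>. \<bar>N x - (\<integral>y. N y \<partial>\<mu>)\<bar> > t}
       \<le> 2 * exp (- (c / psi n) * (t / (\<integral>y. N y \<partial>\<mu>)))"
proof (intro exI[of _ "1/4000"] conjI allI impI)
  show "(0::real) < 1/4000" by simp
  fix n \<mu> N and t :: real
  assume H: "log_concave n \<mu> \<and> symmetric_measure n \<mu> \<and> seminorm_on n N \<and> t > 0"
  then have lc: "log_concave n \<mu>" and sn: "seminorm_on n N" and t: "0 < t" by auto
  have ps: "prob_space \<mu>" and sets_mu: "sets \<mu> = sets (Rn n)" using lc by (auto simp: log_concave_def)
  interpret prob_space \<mu> by (rule ps)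
  have space_mu: "space \<mu> = space (Rn n)" using sets_eq_imp_space_eq[OF sets_mu] .
  define E where "E = (\<integral>y. N y \<partial>\<mu>)"
  define L where "L = measure \<mu> {x \<in> space \<mu>. \<bar>N x - E\<bar> > t}"
  have L1: "L \<le> 1" unfolding L_def by (rule prob_le_1)
  have N0: "x \<in> space \<mu> \<Longrightarrow> 0 \<le> N x" for x using sn_nonneg[OF sn] space_mu by simp
  have goal: "L \<le> 2 * exp (- ((1/4000) / psi n) * (t / E))"
  proof (cases "n = 0")
    case True
    have sp: "space \<mu> = {\<lambda>_. undefined}" using space_mu by (simp add: space_Rn True)
    then have "E = (\<integral>y. N (\<lambda>_. undefined) \<partial>\<mu>)" unfolding E_def by (intro Bochner_Integration.integral_cong) auto
    also have "\<dots> = N (\<lambda>_. undefined)" by (simp add: prob_space)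
    finally have "{x \<in> space \<mu>. \<bar>N x - E\<bar> > t} = {}" using sp t by auto
    then have "L = 0" by (simp add: L_def del: Collect_empty_eq)
    then show ?thesis by simp
  next
    case False
    then have n: "0 < n" by simp
    define k where "k = (1/4000) / psi n"
    have kk: "0 \<le> k \<and> k \<le> 1/25"
    proof -
      have "psi n = 0 \<or> 1/160 \<le> psi n" by (rule psi_bound[OF n])
      then show ?thesis
      proof
        assume "psi n = 0" then show ?thesis by (simp add: k_def)
      next
        assume p: "1/160 \<le> psi n"
        have "(1/4000) / psi n \<le> (1/4000) / (1/160)" using p by (intro divide_left_mono) auto
        then show ?thesis using p by (simp add: k_def)
      qed
    qed
    then have k0: "0 \<le> k" and k1: "k \<le> 1/25" by auto
    have "L \<le> 2 * exp (- k * (t / E))"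
    proof (cases "E \<le> 0")
      case True
      then have "t / E \<le> 0" using t by (simp add: divide_nonneg_nonpos)
      then have "k * (t / E) \<le> 0" using k0 by (rule mult_nonneg_nonpos[rotated])
      then have "0 \<le> - k * (t / E)" by simp
      then have e: "1 \<le> exp (- k * (t / E))" by simp
      show ?thesis using L1 e by linarith
    next
      case False
      then have Epos: "0 < E" by simp
      have int: "integrable \<mu> N"
        using Epos not_integrable_integral_eq[of \<mu> N] unfolding E_def by fastforce
      show ?thesis
      proof (cases "t \<le> 4 * E")
        case True
        have "k * (t / E) \<le> (1/25) * 4"
          using k0 k1 Epos t True by (intro mult_mono) (auto simp: divide_le_eq)
        then have "1 - 4/25 \<le> 1 + (- k * (t / E))" by simp
        also have "\<dots> \<le> exp (- k * (t / E))" by (rule exp_ge_add_one_self)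
        finally have e: "1 - 4/25 \<le> exp (- k * (t / E))" .
        show ?thesis using L1 e by linarith
      next
        case False
        then have tb: "4 * E < t" by simp
        have sub: "{x \<in> space \<mu>. \<bar>N x - E\<bar> > t} \<subseteq> {x \<in> space \<mu>. E + t \<le> N x}"
        proof safe
          fix x assume x: "x \<in> space \<mu>" and a: "t < \<bar>N x - E\<bar>"
          have "0 \<le> N x" using N0[OF x] .
          then show "E + t \<le> N x" using a tb Epos by (auto simp: abs_if split: if_splits)
        qed
        have "L \<le> measure \<mu> {x \<in> space \<mu>. E + t \<le> N x}"
        proof -
          have Nm[measurable]: "N \<in> borel_measurable \<mu>" using int by auto
          have "{x \<in> space \<mu>. E + t \<le> N x} \<in> sets \<mu>" by measurable
          then show ?thesis unfolding L_def by (intro finite_measure_mono[OF sub])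
        qed
        also have "\<dots> \<le> (1/2) powr ((E + t + 3 * E) / (8 * E))"
          using borell[OF lc sn int, of "E + t"] Epos tb by (simp add: E_def)
        also have "\<dots> = exp (- ((E + t + 3 * E) / (8 * E)) * ln 2)"
          by (simp add: powr_def ln_div)
        also have "\<dots> \<le> exp (- k * (t / E))"
        proof (subst exp_le_cancel_iff)
          have z: "0 \<le> (E + t + 3 * E) / (8 * E)" using Epos t by simp
          have "k * (t / E) \<le> (1/16) * (t / E)" using k1 Epos t by (intro mult_right_mono) auto
          also have "\<dots> \<le> (E + t + 3 * E) / (8 * E) * (1/2)" using Epos t by (simp add: field_simps)
          also have "\<dots> \<le> (E + t + 3 * E) / (8 * E) * ln 2" using ln2_ge z by (intro mult_left_mono)
          finally show "- ((E + t + 3 * E) / (8 * E)) * ln 2 \<le> - k * (t / E)" by simp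
        qed
        also have "\<dots> \<le> 2 * exp (- k * (t / E))" by simp
        finally show ?thesis .
      qed
    qed
    then show ?thesis by (simp add: k_def)
  qed
  then show "measure \<mu> {x \<in> space \<mu>. \<bar>N x - (\<integral>y. N y \<partial>\<mu>)\<bar> > t}
       \<le> 2 * exp (- ((1/4000) / psi n) * (t / (\<integral>y. N y \<partial>\<mu>)))" unfolding L_def E_def .
qed

end
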